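(* Let $S$ be a closed convex subset of $\mathbb{R}^p$ and let $x,y\in S$. Then for any $u\in N_S(x)$ and $v\in N_S(y)$, $$(u-v)^{T}(x-y)\le-2r(|u|+|v|),$$ where $r:=\inf_{w\in\partial S}|c-w|$ is the distance from the midpoint $c:=\tfrac12(x+y)$ to the boundary $\partial S$. Moreover, if $S$ is strongly convex with strong convexity constant $R\in(0,\infty)$, then $$(u-v)^{T}(x-y)\le-\frac{1}{2R}(|u|+|v|)|x-y|^2.$$
   Context: $N_S(u):=\{s\in\mathbb{R}^p:\inf_{z\in S}s^{T}(z-u)\ge0\}$ is the inward normal cone of $S$ at $u$; $|\cdot|$ is the Euclidean norm and $\mathbb{S}_p$ the unit sphere. For $S$ convex, its strong convexity constant is $$R:=\inf\Big\{r\ge0:\ S\subset\bigcap_{u\in\partial S,\ v\in N_S(u)\cap\mathbb{S}_p}\overline{B}_r(u+rv)\Big\},$$ where $\overline{B}_r(c)$ is the closed Euclidean ball of radius $r$ centred at $c$; $S$ is called strongly convex if $R$ is finite. *)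

theory Defs
  imports "HOL-Analysis.Analysis"
begin

text \<open>Inward normal cone of S at u: all s with s . (z - u) >= 0 for every z in S
  (equivalently inf over z in S of s . (z - u) >= 0).\<close>
definition normal_cone :: "'a::euclidean_space set \<Rightarrow> 'a \<Rightarrow> 'a set" where
  "normal_cone S u = {s. \<forall>z\<in>S. s \<bullet> (z - u) \<ge> 0}"

text \<open>Strong convexity constant, as an extended real (Inf of the empty set is +infinity).\<close>
definition strong_convexity_constant :: "'a::euclidean_space set \<Rightarrow> ereal" where
  "strong_convexity_constant S =
     Inf (ereal ` {r. r \<ge> 0 \<and>
        S \<subseteq> (\<Inter>u\<in>frontier S. \<Inter>v\<in>normal_cone S u \<inter> sphere 0 1. cball (u + r *\<^sub>R v) r)})"

end

theory Submission
  imports Defs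
begin

lemma nc_nonneg:
  assumes "u \<in> normal_cone S x" "y \<in> S"
  shows "u \<bullet> (y - x) \<ge> 0"
  using assms unfolding normal_cone_def by auto

lemma half_bound:
  fixes S :: "'a::euclidean_space set"
  assumes "closed S" "convex S" "x \<in> S" "y \<in> S" "u \<in> normal_cone S x"
  shows "u \<bullet> (y - x) \<ge> 2 * infdist ((1/2) *\<^sub>R (x + y)) (frontier S) * norm u"
proof -
  define c where "c = (1/2) *\<^sub>R (x + y)"
  define r where "r = infdist c (frontier S)"
  have r0: "r \<ge> 0" unfolding r_def by (rule infdist_nonneg)
  have nn: "u \<bullet> (y - x) \<ge> 0" using nc_nonneg assms by blast
  show ?thesis
  proof (cases "r = 0 \<or> u = 0")
    case True
    then show ?thesis using nn unfolding c_def[symmetric] r_def[symmetric] by auto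
  next
    case False
    then have rp: "r > 0" and un: "u \<noteq> 0" using r0 by auto
    have cS: "c \<in> S" unfolding c_def
      using convexD[OF assms(2) assms(3) assms(4), of "1/2" "1/2"]
      by (simp add: scaleR_right_distrib)
    have disj: "ball c r \<inter> frontier S = {}"
    proof (rule ccontr)
      assume "ball c r \<inter> frontier S \<noteq> {}"
      then obtain z where z: "z \<in> ball c r" "z \<in> frontier S" by auto
      then have "r \<le> dist c z" unfolding r_def by (simp add: infdist_le)
      with z show False by simp
    qed
    have bS: "ball c r \<subseteq> S"
    proof (rule ccontr)
      assume "\<not> ball c r \<subseteq> S"
      then have "ball c r - S \<noteq> {}" by auto
      moreover have "ball c r \<inter> S \<noteq> {}" using cS rp centre_in_ball by blast
      ultimately have "ball c r \<inter> frontier S \<noteq> {}"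
        using connected_Int_frontier[of "ball c r" S] by auto
      with disj show False by simp
    qed
    have cbS: "cball c r \<subseteq> S"
      using closure_minimal[OF bS assms(1)] closure_ball[OF rp, of c] by simp
    define z where "z = c - (r / norm u) *\<^sub>R u"
    have "dist c z = r" unfolding z_def dist_norm using rp un by simp
    then have "z \<in> S" using cbS by auto
    then have "u \<bullet> (z - x) \<ge> 0" using assms(5) unfolding normal_cone_def by auto
    moreover have "u \<bullet> (z - x) = (1/2) * (u \<bullet> (y - x)) - r * norm u"
      unfolding z_def c_def using un
      by (simp add: inner_diff_right inner_add_right algebra_simps power2_norm_eq_inner[symmetric] power2_eq_square)
    ultimately show ?thesis unfolding c_def[symmetric] r_def[symmetric] by simp
  qed
qed

lemma in_frontier:
  fixes S :: "'a::euclidean_space set"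
  assumes "closed S" "x \<in> S" "u \<in> normal_cone S x" "u \<noteq> 0"
  shows "x \<in> frontier S"
proof -
  have "x \<notin> interior S"
  proof
    assume "x \<in> interior S"
    then obtain e where e: "e > 0" "ball x e \<subseteq> S" using mem_interior by blast
    define z where "z = x - (e / 2 / norm u) *\<^sub>R u"
    have "dist x z < e" unfolding z_def dist_norm using e assms(4) by simp
    then have "z \<in> S" using e by auto
    then have "u \<bullet> (z - x) \<ge> 0" using assms(3) unfolding normal_cone_def by auto
    moreover have "u \<bullet> (z - x) = - (e/2) * norm u"
      unfolding z_def using assms(4)
      by (simp add: power2_norm_eq_inner[symmetric] power2_eq_square)
    moreover have "norm u > 0" using assms(4) by simp
    moreover have "(e/2) * norm u > 0" using e \<open>norm u > 0\<close> by simp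
    ultimately show False by linarith
  qed
  then show ?thesis using assms(1,2) by (simp add: frontier_def)
qed

lemma norm_expand:
  fixes d w :: "'a::real_inner"
  assumes "norm w = 1"
  shows "(norm (d - r *\<^sub>R w))\<^sup>2 = (norm d)\<^sup>2 - 2 * r * (w \<bullet> d) + r\<^sup>2"
proof -
  have ww: "w \<bullet> w = 1" using assms by (metis norm_eq_sqrt_inner real_sqrt_eq_1_iff)
  have "(norm (d - r *\<^sub>R w))\<^sup>2 = (d - r *\<^sub>R w) \<bullet> (d - r *\<^sub>R w)"
    by (simp add: power2_norm_eq_inner)
  also have "\<dots> = d \<bullet> d - 2 * r * (w \<bullet> d) + r\<^sup>2 * (w \<bullet> w)"
    by (simp add: inner_diff_left inner_diff_right inner_commute algebra_simps power2_eq_square)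
  also have "\<dots> = (norm d)\<^sup>2 - 2 * r * (w \<bullet> d) + r\<^sup>2"
    using ww by (simp add: power2_norm_eq_inner)
  finally show ?thesis .
qed

lemma ball_bound:
  fixes S :: "'a::euclidean_space set"
  assumes "closed S" "x \<in> S" "y \<in> S" "u \<in> normal_cone S x" "r \<ge> 0"
    and inc: "S \<subseteq> (\<Inter>u\<in>frontier S. \<Inter>v\<in>normal_cone S u \<inter> sphere 0 1. cball (u + r *\<^sub>R v) r)"
  shows "norm u * (norm (y - x))\<^sup>2 \<le> 2 * r * (u \<bullet> (y - x))"
proof (cases "u = 0")
  case True then show ?thesis by simp
next
  case False
  define w where "w = (1 / norm u) *\<^sub>R u"
  have nu: "norm u > 0" using False by simp
  have xf: "x \<in> frontier S" using in_frontier assms False by blast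
  have "w \<in> normal_cone S x"
    using assms(4) nu unfolding normal_cone_def w_def by simp
  moreover have "w \<in> sphere 0 1" unfolding w_def using nu by simp
  ultimately have "y \<in> cball (x + r *\<^sub>R w) r" using inc xf assms(3) by blast
  then have "norm ((y - x) - r *\<^sub>R w) \<le> r" by (simp add: dist_norm norm_minus_commute algebra_simps)
  then have "(norm ((y - x) - r *\<^sub>R w))\<^sup>2 \<le> r\<^sup>2" using assms(5) by (simp add: power_mono)
  moreover have "(norm ((y - x) - r *\<^sub>R w))\<^sup>2 = (norm (y - x))\<^sup>2 - 2 * r * (w \<bullet> (y - x)) + r\<^sup>2"
    by (rule norm_expand) (use \<open>w \<in> sphere 0 1\<close> in simp)
  ultimately have "(norm (y - x))\<^sup>2 \<le> 2 * r * (w \<bullet> (y - x))" by simp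
  then have "norm u * (norm (y - x))\<^sup>2 \<le> norm u * (2 * r * (w \<bullet> (y - x)))"
    using nu by simp
  also have "\<dots> = 2 * r * (u \<bullet> (y - x))" unfolding w_def using nu by simp
  finally show ?thesis .
qed

lemma inf_bound:
  fixes S :: "'a::euclidean_space set"
  assumes "closed S" "x \<in> S" "y \<in> S" "u \<in> normal_cone S x"
    and R: "strong_convexity_constant S = ereal R"
  shows "norm u * (norm (y - x))\<^sup>2 \<le> 2 * R * (u \<bullet> (y - x))"
proof (rule ccontr)
  let ?A = "{r. r \<ge> 0 \<and>
        S \<subseteq> (\<Inter>u\<in>frontier S. \<Inter>v\<in>normal_cone S u \<inter> sphere 0 1. cball (u + r *\<^sub>R v) r)}"
  assume neg: "\<not> ?thesis"
  have a0: "u \<bullet> (y - x) \<ge> 0" using nc_nonneg assms by blast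
  define a where "a = u \<bullet> (y - x)"
  define e where "e = (norm u * (norm (y - x))\<^sup>2 - 2 * R * a) / (2 * a + 1)"
  have ep: "e > 0" unfolding e_def using neg a0 a_def by simp
  have "Inf (ereal ` ?A) < ereal (R + e)"
    using R ep unfolding strong_convexity_constant_def by simp
  then obtain r where r: "r \<in> ?A" "ereal r < ereal (R + e)" by (auto simp: Inf_less_iff)
  have "norm u * (norm (y - x))\<^sup>2 \<le> 2 * r * a"
    using ball_bound[OF assms(1-4), of r] r(1) a_def by auto
  also have "\<dots> \<le> 2 * (R + e) * a" using r(2) a0 a_def by (simp add: mult_right_mono)
  also have "\<dots> < norm u * (norm (y - x))\<^sup>2"
  proof -
    have "e * (2 * a + 1) = norm u * (norm (y - x))\<^sup>2 - 2 * R * a"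
      unfolding e_def using a0 a_def by simp
    then show ?thesis using ep by (simp add: algebra_simps)
  qed
  finally show False by simp
qed

theorem lemma2:
  fixes S :: "'a::euclidean_space set" and x y u v :: 'a
  assumes "closed S" and "convex S"
    and "x \<in> S" and "y \<in> S"
    and "u \<in> normal_cone S x" and "v \<in> normal_cone S y"
  shows "(u - v) \<bullet> (x - y)
           \<le> - 2 * infdist ((1/2) *\<^sub>R (x + y)) (frontier S) * (norm u + norm v)
         \<and> (\<forall>R. strong_convexity_constant S = ereal R \<and> 0 < R \<longrightarrow>
           (u - v) \<bullet> (x - y) \<le> - (1 / (2 * R)) * (norm u + norm v) * (norm (x - y))\<^sup>2)"
proof
  have e: "(u - v) \<bullet> (x - y) = - (u \<bullet> (y - x)) - v \<bullet> (x - y)"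
    by (simp add: inner_diff_left inner_diff_right)
  have h1: "u \<bullet> (y - x) \<ge> 2 * infdist ((1/2) *\<^sub>R (x + y)) (frontier S) * norm u"
    using half_bound assms by blast
  have h2: "v \<bullet> (x - y) \<ge> 2 * infdist ((1/2) *\<^sub>R (y + x)) (frontier S) * norm v"
    using half_bound[OF assms(1,2,4,3,6)] by blast
  show "(u - v) \<bullet> (x - y)
           \<le> - 2 * infdist ((1/2) *\<^sub>R (x + y)) (frontier S) * (norm u + norm v)"
    using h1 h2 unfolding e by (simp add: add.commute algebra_simps)
  show "\<forall>R. strong_convexity_constant S = ereal R \<and> 0 < R \<longrightarrow>
           (u - v) \<bullet> (x - y) \<le> - (1 / (2 * R)) * (norm u + norm v) * (norm (x - y))\<^sup>2"
  proof (intro allI impI)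
    fix R assume R: "strong_convexity_constant S = ereal R \<and> 0 < R"
    have b1: "norm u * (norm (y - x))\<^sup>2 \<le> 2 * R * (u \<bullet> (y - x))"
      using inf_bound[OF assms(1,3,4,5)] R by blast
    have b2: "norm v * (norm (x - y))\<^sup>2 \<le> 2 * R * (v \<bullet> (x - y))"
      using inf_bound[OF assms(1,4,3,6)] R by blast
    have "(norm u + norm v) * (norm (x - y))\<^sup>2 \<le> 2 * R * (- ((u - v) \<bullet> (x - y)))"
      using b1 b2 unfolding e by (simp add: norm_minus_commute algebra_simps)
    then have "(1 / (2 * R)) * ((norm u + norm v) * (norm (x - y))\<^sup>2) \<le> - ((u - v) \<bullet> (x - y))"
      using R by (simp add: field_simps)
    then show "(u - v) \<bullet> (x - y) \<le> - (1 / (2 * R)) * (norm u + norm v) * (norm (x - y))\<^sup>2"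
      by simp
  qed
qed

end
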